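(* Let $\psi$ be an injective map from the positive integers to the positive integers and let $A=\{\psi(n): n\ge 1\}$. Let $\alpha$ be a positive integer. Define $\Gamma^{\psi}_{\alpha}(0)=1$ and, for a positive integer $m$, \[ \Gamma^{\psi}_{\alpha}(m)=\sum_{(N_0,N_1,N_2,\dots)}\ \prod_{j\ge0}\bar{p}^{A}(N_j), \] the sum running over all sequences of nonnegative integers $(N_0,N_1,\dots)$ with $m=(\alpha+1)\sum_{i\ge0}2^{i}N_i$ (so $\Gamma^{\psi}_{\alpha}(m)=0$ if there is no such sequence). Then for every nonnegative integer $n$, \[ p^{A}_{\alpha}(n)=\sum_{i=0}^{n}p^{A}(n-i)\,\Gamma^{\psi}_{\alpha}(i). \]
   Context: For a set $A$ of positive integers and a positive integer $\alpha$, $p^{A}_{\alpha}(n)$ is the number of partitions of $n$ into parts from $A$ in which each part occurs at most $\alpha$ times, and $p^{A}(n)$ is the number of partitions of $n$ into parts from $A$ without restriction; $p^{A}_{\alpha}(0)=p^{A}(0)=1$. Further $\bar{p}^{A}(n)=E^{A}(n)-O^{A}(n)$, where $E^{A}(n)$ (resp. $O^{A}(n)$) is the number of partitions of $n$ into parts from $A$ (no restriction on multiplicities) with an even (resp. odd) number of parts, and $\bar{p}^{A}(0)=1$. *)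

theory Defs
  imports Main "HOL-Library.Multiset"
begin

definition partsA :: "nat set \<Rightarrow> nat \<Rightarrow> nat multiset set" where
  "partsA A n = {M. set_mset M \<subseteq> A \<and> sum_mset M = n}"

definition pA :: "nat set \<Rightarrow> nat \<Rightarrow> nat" where
  "pA A n = card (partsA A n)"

definition pA_alpha :: "nat set \<Rightarrow> nat \<Rightarrow> nat \<Rightarrow> nat" where
  "pA_alpha A \<alpha> n = card {M \<in> partsA A n. \<forall>x. count M x \<le> \<alpha>}"

definition EA :: "nat set \<Rightarrow> nat \<Rightarrow> nat" where
  "EA A n = card {M \<in> partsA A n. even (size M)}"

definition OA :: "nat set \<Rightarrow> nat \<Rightarrow> nat" where
  "OA A n = card {M \<in> partsA A n. odd (size M)}"

definition pbarA :: "nat set \<Rightarrow> nat \<Rightarrow> int" where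
  "pbarA A n = int (EA A n) - int (OA A n)"

text \<open>Gamma: sum over (finitely supported) sequences N of nonnegative integers with
  m = (alpha+1) * sum_i 2^i N_i of prod_j pbar(N_j); since pbar(0) = 1 the infinite
  product equals the product over the support.\<close>

definition Gamma :: "nat set \<Rightarrow> nat \<Rightarrow> nat \<Rightarrow> int" where
  "Gamma A \<alpha> m = (if m = 0 then 1 else
     (\<Sum>N \<in> {N :: nat \<Rightarrow> nat. finite {i. N i \<noteq> 0} \<and>
                 m = (\<alpha> + 1) * (\<Sum>i \<in> {i. N i \<noteq> 0}. 2 ^ i * N i)}.
        \<Prod>j \<in> {j. N j \<noteq> 0}. pbarA A (N j)))"

end

theory Submission
  imports Defs "HOL-Computational_Algebra.Formal_Power_Series"
begin


definition dil :: "nat \<Rightarrow> int fps \<Rightarrow> int fps" where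
  "dil d f = f oo fps_X ^ d"

lemma dil_nth:
  assumes "d > 0"
  shows "fps_nth (dil d f) n = (if d dvd n then fps_nth f (n div d) else 0)"
proof -
  have "fps_nth (dil d f) n = (\<Sum>i=0..n. fps_nth f i * (if i = n div d \<and> d dvd n then 1 else 0))"
    unfolding dil_def fps_compose_nth
    by (intro sum.cong refl) (use assms in \<open>auto simp: power_mult[symmetric]\<close>)
  also have "\<dots> = (if d dvd n then fps_nth f (n div d) else 0)"
    using assms by (auto simp: mult_delta_right div_le_dividend)
  finally show ?thesis .
qed

lemma X0: "d > 0 \<Longrightarrow> fps_nth (fps_X ^ d :: int fps) 0 = 0" by simp

lemma dil_mult: "d > 0 \<Longrightarrow> dil d (f * g) = dil d f * dil d g"
  unfolding dil_def by (rule fps_compose_mult_distrib) simp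

lemma dil_prod: "d > 0 \<Longrightarrow> dil d (\<Prod>x\<in>S. f x) = (\<Prod>x\<in>S. dil d (f x))"
  unfolding dil_def by (rule fps_compose_prod_distrib) simp

lemma dil_1[simp]: "dil d 1 = 1" unfolding dil_def by simp

lemma dil_add: "dil d (f + g) = dil d f + dil d g"
  unfolding dil_def by (rule fps_compose_add_distrib)

lemma dil_sub: "dil d (f - g) = dil d f - dil d g"
  unfolding dil_def by (rule fps_compose_sub_distrib)

lemma dil_Xpow: "d > 0 \<Longrightarrow> dil d (fps_X ^ k) = fps_X ^ (d * k)"
  unfolding dil_def by (subst fps_X_power_compose) (auto simp: power_mult)

lemma dil_dil: "d > 0 \<Longrightarrow> e > 0 \<Longrightarrow> dil d (dil e f) = dil (e * d) f"
  by (auto simp: fps_eq_iff dil_nth dvd_mult_imp_div div_mult2_eq)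

definition SS :: "'a set \<Rightarrow> ('a \<Rightarrow> nat) \<Rightarrow> nat \<Rightarrow> ('a \<Rightarrow> nat) set" where
  "SS I d k = {N. (\<forall>i. i \<notin> I \<longrightarrow> N i = 0) \<and> (\<Sum>i\<in>I. d i * N i) = k}"

lemma finite_SS:
  assumes "finite I" "\<forall>i\<in>I. d i > 0"
  shows "finite (SS I d k)"
proof (rule finite_subset)
  show "SS I d k \<subseteq> {N. \<forall>x. (x \<in> I \<longrightarrow> N x \<in> {0..k}) \<and> (x \<notin> I \<longrightarrow> N x = 0)}"
  proof safe
    fix N x assume N: "N \<in> SS I d k" and x: "x \<in> I"
    have "d x * N x \<le> (\<Sum>i\<in>I. d i * N i)"
      by (rule member_le_sum) (use assms x in auto)
    moreover have "N x \<le> d x * N x" using assms x by (simp add: Suc_le_eq)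
    moreover have "k = (\<Sum>i\<in>I. d i * N i)" using N by (simp add: SS_def)
    ultimately have "N x \<le> k" by linarith
    then show "N x \<in> {0..k}" by simp
  qed (auto simp: SS_def)
  show "finite {N. \<forall>x. (x \<in> I \<longrightarrow> N x \<in> {0..k}) \<and> (x \<notin> I \<longrightarrow> N x = (0::nat))}"
    by (rule finite_set_of_finite_funs) (use assms in auto)
qed

lemma SS_empty: "SS {} d k = (if k = 0 then {\<lambda>_. 0} else {})"
  by (auto simp: SS_def)

lemma SS_insert:
  assumes "b \<notin> I" "finite I"
  shows "SS (insert b I) d k =
    (\<lambda>(j, N). N(b := j)) ` (SIGMA j:{j. d b * j \<le> k}. SS I d (k - d b * j))"
proof (rule equalityI; rule subsetI)
  fix M assume M: "M \<in> SS (insert b I) d k"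
  have s1: "(\<Sum>i\<in>I. d i * (M(b:=0)) i) = (\<Sum>i\<in>I. d i * M i)"
    by (rule sum.cong) (use assms in auto)
  have s2: "(\<Sum>i\<in>insert b I. d i * M i) = d b * M b + (\<Sum>i\<in>I. d i * M i)"
    using assms by simp
  show "M \<in> (\<lambda>(j, N). N(b := j)) ` (SIGMA j:{j. d b * j \<le> k}. SS I d (k - d b * j))"
  proof (rule image_eqI[where x="(M b, M(b:=0))"])
    show "M = (case (M b, M(b := 0)) of (j, N) \<Rightarrow> N(b := j))" by simp
    show "(M b, M(b := 0)) \<in> (SIGMA j:{j. d b * j \<le> k}. SS I d (k - d b * j))"
      using M s1 s2 unfolding SS_def by auto
  qed
next
  fix x assume "x \<in> (\<lambda>(j, N). N(b := j)) ` (SIGMA j:{j. d b * j \<le> k}. SS I d (k - d b * j))"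
  then obtain j N where x: "x = N(b:=j)" and j: "j \<in> {j. d b * j \<le> k}" and N: "N \<in> SS I d (k - d b * j)"
    by auto
  have s1: "(\<Sum>i\<in>I. d i * (N(b:=j)) i) = (\<Sum>i\<in>I. d i * N i)"
    by (rule sum.cong) (use assms in auto)
  show "x \<in> SS (insert b I) d k"
    unfolding x using j N s1 assms unfolding SS_def by auto
qed

lemma core:
  assumes "finite I" "\<forall>i\<in>I. d i > 0"
  shows "fps_nth (\<Prod>i\<in>I. dil (d i) (F i)) k = (\<Sum>N\<in>SS I d k. \<Prod>i\<in>I. fps_nth (F i) (N i))"
  using assms
proof (induction I arbitrary: k rule: finite_induct)
  case empty
  then show ?case by (simp add: SS_empty)
next
  case (insert b I)
  define J where "J = {j. d b * j \<le> k}"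
  have db: "d b > 0" using insert by auto
  have "J \<subseteq> {..k}"
  proof
    fix j assume "j \<in> J"
    then have "d b * j \<le> k" by (simp add: J_def)
    moreover have "j \<le> d b * j" using db by (simp add: Suc_le_eq)
    ultimately have "j \<le> k" by linarith
    then show "j \<in> {..k}" by simp
  qed
  then have finJ: "finite J" by (rule finite_subset) simp
  define P where "P m = fps_nth (\<Prod>i\<in>I. dil (d i) (F i)) m" for m
  have IH: "P m = (\<Sum>N\<in>SS I d m. \<Prod>i\<in>I. fps_nth (F i) (N i))" for m
    unfolding P_def using insert by auto
  have "fps_nth (\<Prod>i\<in>insert b I. dil (d i) (F i)) k
      = (\<Sum>t=0..k. fps_nth (dil (d b) (F b)) t * P (k - t))"
    using insert by (simp add: fps_mult_nth P_def)
  also have "\<dots> = (\<Sum>t\<in>(\<lambda>j. d b * j) ` J. fps_nth (F b) (t div d b) * P (k - t))"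
  proof (rule sum.mono_neutral_cong_right)
    show "(\<lambda>j. d b * j) ` J \<subseteq> {0..k}" unfolding J_def by auto
    show "\<forall>i\<in>{0..k} - (\<lambda>j. d b * j) ` J. fps_nth (dil (d b) (F b)) i * P (k - i) = 0"
      using db by (auto simp: dil_nth J_def)
    show "\<And>x. x \<in> (\<lambda>j. d b * j) ` J \<Longrightarrow> fps_nth (dil (d b) (F b)) x * P (k - x) = fps_nth (F b) (x div d b) * P (k - x)"
      using db by (auto simp: dil_nth)
  qed auto
  also have "\<dots> = (\<Sum>j\<in>J. fps_nth (F b) j * P (k - d b * j))"
    using db by (subst sum.reindex) (auto simp: inj_on_def)
  also have "\<dots> = (\<Sum>j\<in>J. \<Sum>N\<in>SS I d (k - d b * j). fps_nth (F b) j * (\<Prod>i\<in>I. fps_nth (F i) (N i)))"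
    by (simp add: IH sum_distrib_left)
  also have "\<dots> = (\<Sum>(j,N)\<in>(SIGMA j:J. SS I d (k - d b * j)). fps_nth (F b) j * (\<Prod>i\<in>I. fps_nth (F i) (N i)))"
    by (rule sum.Sigma) (use finJ finite_SS insert in auto)
  also have "\<dots> = (\<Sum>M\<in>SS (insert b I) d k. \<Prod>i\<in>insert b I. fps_nth (F i) (M i))"
  proof -
    have inj: "inj_on (\<lambda>(j, N). N(b := j)) (SIGMA j:J. SS I d (k - d b * j))"
    proof (rule inj_onI, clarify)
      fix j N j' N'
      assume a: "N \<in> SS I d (k - d b * j)" "N' \<in> SS I d (k - d b * j')" and e: "N(b := j) = N'(b := j')"
      have "j = j'" using fun_cong[OF e, of b] by simp
      moreover have "N x = N' x" for x
      proof (cases "x = b")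
        case True then show ?thesis using a insert(2) unfolding SS_def by auto
      next
        case False then show ?thesis using fun_cong[OF e, of x] by simp
      qed
      ultimately show "j = j' \<and> N = N'" by auto
    qed
    have pr: "(\<Prod>i\<in>I. fps_nth (F i) ((N(b:=j)) i)) = (\<Prod>i\<in>I. fps_nth (F i) (N i))" for N j
      by (rule prod.cong) (use insert in auto)
    show ?thesis
      unfolding J_def
      by (subst SS_insert[OF insert(2,1)], subst sum.reindex[OF inj[unfolded J_def]])
         (use insert pr in \<open>auto intro!: sum.cong\<close>)
  qed
  finally show ?case .
qed

lemma sum_mset_count:
  assumes "finite B" "set_mset M \<subseteq> B"
  shows "sum_mset M = (\<Sum>x\<in>B. x * count M x)"
  using assms(2)
proof (induction M)
  case empty then show ?case by simp
next
  case (add a M)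
  then have aB: "a \<in> B" by auto
  have "(\<Sum>x\<in>B. x * count (add_mset a M) x) = (\<Sum>x\<in>B. x * count M x + (if x = a then a else 0))"
    by (rule sum.cong) auto
  also have "\<dots> = (\<Sum>x\<in>B. x * count M x) + a"
    using assms(1) aB by (simp add: sum.distrib)
  finally show ?case using add by simp
qed

lemma size_count:
  assumes "finite B" "set_mset M \<subseteq> B"
  shows "size M = (\<Sum>x\<in>B. count M x)"
  using assms(2)
proof (induction M)
  case empty then show ?case by simp
next
  case (add a M)
  then have aB: "a \<in> B" by auto
  have "(\<Sum>x\<in>B. count (add_mset a M) x) = (\<Sum>x\<in>B. count M x + (if x = a then 1 else 0))"
    by (rule sum.cong) auto
  also have "\<dots> = (\<Sum>x\<in>B. count M x) + 1"
    using assms(1) aB by (simp add: sum.distrib)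
  finally show ?case using add by simp
qed

lemma bij_count:
  assumes A0: "0 \<notin> A" and kn: "k \<le> n"
  shows "bij_betw count (partsA A k) (SS (A \<inter> {..n}) (\<lambda>i. i) k)"
proof -
  let ?B = "A \<inter> {..n}"
  have finB: "finite ?B" by simp
  show ?thesis
  proof (rule bij_betwI'[where f = count])
    fix M M' assume "M \<in> partsA A k" "M' \<in> partsA A k"
    show "(count M = count M') = (M = M')" by (metis count_inject)
  next
    fix M assume M: "M \<in> partsA A k"
    have sub: "set_mset M \<subseteq> ?B"
    proof
      fix x assume x: "x \<in> set_mset M"
      have "sum_mset M = (\<Sum>y\<in>set_mset M. y * count M y)"
        by (rule sum_mset_count) auto
      also have "\<dots> \<ge> x * count M x"
        by (rule member_le_sum) (use x in auto)
      finally have "x * count M x \<le> sum_mset M" .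
      moreover have "x \<le> x * count M x" using x by simp
      moreover have "sum_mset M = k" using M by (simp add: partsA_def)
      ultimately have "x \<le> k" by linarith
      then show "x \<in> ?B" using x M kn by (auto simp: partsA_def)
    qed
    have z: "\<forall>i. i \<notin> ?B \<longrightarrow> count M i = 0"
    proof (intro allI impI)
      fix i assume "i \<notin> ?B"
      then have "i \<notin># M" using sub by blast
      then show "count M i = 0" by (simp add: count_eq_zero_iff)
    qed
    have s: "(\<Sum>i\<in>?B. i * count M i) = k"
      using sum_mset_count[OF finB sub] M unfolding partsA_def by simp
    show "count M \<in> SS ?B (\<lambda>i. i) k"
      unfolding SS_def using z s by blast
  next
    fix N assume N: "N \<in> SS ?B (\<lambda>i. i) k"
    have Nz: "\<And>i. i \<notin> ?B \<Longrightarrow> N i = 0" and Ns: "(\<Sum>i\<in>?B. i * N i) = k"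
      using N unfolding SS_def by blast+
    have "{x. N x > 0} \<subseteq> ?B" using Nz by (metis mem_Collect_eq not_less0 subsetI)
    then have fin: "finite {x. N x > 0}" using finB by (rule finite_subset)
    define M where "M = Abs_multiset N"
    have cM: "count M = N" unfolding M_def using fin by (rule count_Abs_multiset)
    have sub: "set_mset M \<subseteq> ?B"
    proof
      fix x assume "x \<in># M"
      then have "count M x > 0" by simp
      then have "N x > 0" using cM by simp
      then show "x \<in> ?B" using Nz by (metis less_irrefl)
    qed
    have "sum_mset M = k" using sum_mset_count[OF finB sub] Ns cM by simp
    then have "M \<in> partsA A k"
      unfolding partsA_def using sub by blast
    then show "\<exists>M\<in>partsA A k. N = count M" using cM by auto
  qed
qed

lemma pbar0:
  assumes "0 \<notin> A" shows "pbarA A 0 = 1"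
proof -
  have "partsA A 0 = {{#}}" using assms by (auto simp: partsA_def; metis set_mset_eq_empty_iff all_not_in_conv subsetD)
  moreover have "{M. M = ({#}::nat multiset) \<and> even (size M)} = {{#}}" by (rule set_eqI) auto
  moreover have "{M. M = ({#}::nat multiset) \<and> odd (size M)} = {}" by (rule set_eqI) auto
  ultimately have e: "{M \<in> partsA A 0. even (size M)} = {{#}}" and o: "{M \<in> partsA A 0. odd (size M)} = {}"
    by simp_all
  show ?thesis unfolding pbarA_def EA_def OA_def by (simp only: e o) simp
qed



definition One :: "int fps" where "One = Abs_fps (\<lambda>_. 1)"
definition Le :: "nat \<Rightarrow> int fps" where "Le \<alpha> = Abs_fps (\<lambda>j. if j \<le> \<alpha> then 1 else 0)"
definition Alt :: "int fps" where "Alt = Abs_fps (\<lambda>j. (-1) ^ j)"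

lemma prod_ind:
  "finite S \<Longrightarrow> (\<Prod>a\<in>S. (if P a then 1 else 0 :: int)) = (if \<forall>a\<in>S. P a then 1 else 0)"
  by (induction S rule: finite_induct) auto

lemma card_filter_sum:
  "finite S \<Longrightarrow> int (card {x\<in>S. P x}) = (\<Sum>x\<in>S. if P x then 1 else 0)"
proof -
  assume S: "finite S"
  have "(\<Sum>x\<in>S. if P x then 1 else 0) = (\<Sum>x\<in>{x\<in>S. P x}. (1::int))"
    by (rule sum.inter_filter[OF S, symmetric])
  then show ?thesis by simp
qed

lemma pos: "0 \<notin> A \<Longrightarrow> \<forall>a\<in>A \<inter> {..n}. (a::nat) > 0"
  by (metis IntD1 gr0I)

lemma parts_finite:
  assumes "0 \<notin> A" "k \<le> n" shows "finite (partsA A k)"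
proof -
  have fin: "finite (SS (A \<inter> {..n}) (\<lambda>i. i) k)"
    by (rule finite_SS) (use pos[OF assms(1), of n] in auto)
  show ?thesis using bij_betw_finite[OF bij_count[OF assms]] fin by simp
qed

lemma reindex_parts:
  assumes "0 \<notin> A" "k \<le> n"
  shows "(\<Sum>N\<in>SS (A \<inter> {..n}) (\<lambda>i. i) k. g N) = (\<Sum>M\<in>partsA A k. g (count M))"
  using sum.reindex_bij_betw[OF bij_count[OF assms], of g] by simp

lemma coeff_P1:
  assumes "0 \<notin> A" "k \<le> n"
  shows "fps_nth (\<Prod>a\<in>A \<inter> {..n}. dil a One) k = int (pA A k)"
proof -
  have "fps_nth (\<Prod>a\<in>A \<inter> {..n}. dil a One) k = (\<Sum>N\<in>SS (A \<inter> {..n}) (\<lambda>i. i) k. 1)"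
    using core[of "A \<inter> {..n}" "\<lambda>i. i" "\<lambda>_. One" k] pos[OF assms(1), of n] by (simp add: One_def)
  also have "\<dots> = (\<Sum>M\<in>partsA A k. 1)" by (rule reindex_parts[OF assms])
  also have "\<dots> = int (pA A k)" by (simp add: pA_def)
  finally show ?thesis .
qed

lemma coeff_PL:
  assumes "0 \<notin> A" "k \<le> n"
  shows "fps_nth (\<Prod>a\<in>A \<inter> {..n}. dil a (Le \<alpha>)) k = int (pA_alpha A \<alpha> k)"
proof -
  let ?B = "A \<inter> {..n}"
  have "fps_nth (\<Prod>a\<in>?B. dil a (Le \<alpha>)) k
      = (\<Sum>N\<in>SS ?B (\<lambda>i. i) k. \<Prod>a\<in>?B. (if N a \<le> \<alpha> then 1 else 0))"
    using core[of ?B "\<lambda>i. i" "\<lambda>_. Le \<alpha>" k] pos[OF assms(1), of n] by (simp add: Le_def)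
  also have "\<dots> = (\<Sum>N\<in>SS ?B (\<lambda>i. i) k. (if \<forall>x. N x \<le> \<alpha> then 1 else 0))"
  proof (rule sum.cong[OF refl])
    fix N assume N: "N \<in> SS ?B (\<lambda>i. i) k"
    have Nz: "\<forall>x. x \<notin> ?B \<longrightarrow> N x = 0" using N unfolding SS_def by blast
    have "(\<forall>a\<in>?B. N a \<le> \<alpha>) = (\<forall>x. N x \<le> \<alpha>)"
    proof (intro iffI allI ballI)
      fix x assume h: "\<forall>a\<in>?B. N a \<le> \<alpha>"
      show "N x \<le> \<alpha>"
      proof (cases "x \<in> ?B")
        case True then show ?thesis using h by blast
      next
        case False then show ?thesis using Nz by simp
      qed
    next
      fix a assume "\<forall>x. N x \<le> \<alpha>" then show "N a \<le> \<alpha>" by blast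
    qed
    then show "(\<Prod>a\<in>?B. (if N a \<le> \<alpha> then 1 else 0)) = (if \<forall>x. N x \<le> \<alpha> then 1 else (0::int))"
      by (simp add: prod_ind)
  qed
  also have "\<dots> = (\<Sum>M\<in>partsA A k. (if \<forall>x. count M x \<le> \<alpha> then 1 else 0))"
    by (rule reindex_parts[OF assms])
  also have "\<dots> = int (pA_alpha A \<alpha> k)"
    unfolding pA_alpha_def by (rule card_filter_sum[symmetric, OF parts_finite[OF assms]])
  finally show ?thesis .
qed

lemma coeff_PB:
  assumes "0 \<notin> A" "k \<le> n"
  shows "fps_nth (\<Prod>a\<in>A \<inter> {..n}. dil a Alt) k = pbarA A k"
proof -
  let ?B = "A \<inter> {..n}"
  have "fps_nth (\<Prod>a\<in>?B. dil a Alt) k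
      = (\<Sum>N\<in>SS ?B (\<lambda>i. i) k. \<Prod>a\<in>?B. (-1) ^ N a)"
    using core[of ?B "\<lambda>i. i" "\<lambda>_. Alt" k] pos[OF assms(1), of n] by (simp add: Alt_def)
  also have "\<dots> = (\<Sum>N\<in>SS ?B (\<lambda>i. i) k. (-1) ^ (\<Sum>a\<in>?B. N a))"
    by (simp add: power_sum)
  also have "\<dots> = (\<Sum>M\<in>partsA A k. (-1) ^ (\<Sum>a\<in>?B. count M a))"
    by (rule reindex_parts[OF assms])
  also have "\<dots> = (\<Sum>M\<in>partsA A k. (if even (size M) then 1 else 0) - (if odd (size M) then 1 else 0))"
  proof (rule sum.cong[OF refl])
    fix M assume M: "M \<in> partsA A k"
    have "count M \<in> SS ?B (\<lambda>i. i) k" using bij_betwE[OF bij_count[OF assms]] M by blast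
    then have z: "\<And>x. x \<notin> ?B \<Longrightarrow> count M x = 0" unfolding SS_def by blast
    have "set_mset M \<subseteq> ?B"
    proof
      fix x assume "x \<in># M"
      then have c: "count M x \<noteq> 0" by simp
      show "x \<in> ?B"
      proof (rule ccontr)
        assume "x \<notin> ?B"
        then have "count M x = 0" by (rule z)
        with c show False by simp
      qed
    qed
    then have "size M = (\<Sum>a\<in>?B. count M a)" by (intro size_count) auto
    then show "((-1::int) ^ (\<Sum>a\<in>?B. count M a)) = (if even (size M) then 1 else 0) - (if odd (size M) then 1 else 0)"
      by simp
  qed
  also have "\<dots> = (\<Sum>M\<in>partsA A k. (if even (size M) then 1 else 0)) - (\<Sum>M\<in>partsA A k. (if odd (size M) then 1 else 0))"
    by (rule sum_subtractf)
  also have "\<dots> = pbarA A k"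
    unfolding pbarA_def EA_def OA_def
    by (simp only: card_filter_sum[OF parts_finite[OF assms]])
  finally show ?thesis .
qed



lemma Le_eq: "Le \<alpha> = One * (1 - fps_X ^ (\<alpha>+1))"
proof (rule fps_ext)
  fix n
  have "fps_nth (One * (1 - fps_X ^ (\<alpha>+1))) n = fps_nth One n - fps_nth (One * fps_X ^ (\<alpha>+1)) n"
    by (simp only: right_diff_distrib mult_1_right fps_sub_nth)
  also have "\<dots> = (if n \<le> \<alpha> then 1 else 0)"
    by (simp only: fps_X_power_mult_right_nth) (simp add: One_def)
  finally show "fps_nth (Le \<alpha>) n = fps_nth (One * (1 - fps_X ^ (\<alpha>+1))) n"
    by (simp add: Le_def)
qed

lemma Alt_eq: "Alt * (1 + fps_X ^ 1) = 1"
proof (rule fps_ext)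
  fix n
  have "Alt * (1 + fps_X ^ 1) = Alt + Alt * fps_X ^ 1" by (simp add: algebra_simps)
  then show "fps_nth (Alt * (1 + fps_X ^ 1)) n = fps_nth 1 n"
    by (cases n) (simp_all add: fps_X_power_mult_right_nth Alt_def del: power_one_right)
qed

lemma dil_Alt: "d > 0 \<Longrightarrow> dil d Alt * (1 + fps_X ^ d) = 1"
proof -
  assume d: "d > 0"
  have "dil d (Alt * (1 + fps_X ^ 1)) = 1" by (simp only: Alt_eq dil_1)
  then show ?thesis by (simp only: dil_mult[OF d] dil_add dil_1 dil_Xpow[OF d] mult_1_right)
qed

lemma tele:
  assumes D: "D > 0"
  shows "1 - fps_X ^ D = (\<Prod>i\<le>K. dil (D * 2 ^ i) Alt) * (1 - fps_X ^ (D * 2 ^ Suc K))"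
proof (induction K)
  case 0
  have "(1 - fps_X ^ (D * 2) :: int fps) = (1 + fps_X ^ D) * (1 - fps_X ^ D)"
    by (simp add: algebra_simps power_mult power2_eq_square)
  then have "dil D Alt * (1 - fps_X ^ (D * 2)) = (dil D Alt * (1 + fps_X ^ D)) * (1 - fps_X ^ D)"
    by (simp add: mult.assoc)
  then show ?case using dil_Alt[OF D] by simp
next
  case (Suc K)
  define y :: "int fps" where "y = fps_X ^ (D * 2 ^ Suc K)"
  define P where "P = (\<Prod>i\<le>K. dil (D * 2 ^ i) Alt)"
  define a where "a = dil (D * 2 ^ Suc K) Alt"
  have ay: "a * (1 + y) = 1" unfolding a_def y_def by (rule dil_Alt) (use D in simp)
  have yy: "fps_X ^ (D * 2 ^ Suc (Suc K)) = y * y"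
    unfolding y_def by (simp add: power_add[symmetric] algebra_simps)
  have "(\<Prod>i\<le>Suc K. dil (D * 2 ^ i) Alt) * (1 - fps_X ^ (D * 2 ^ Suc (Suc K)))
      = P * a * ((1 + y) * (1 - y))"
    unfolding P_def a_def yy by (simp add: algebra_simps)
  also have "\<dots> = P * (a * (1 + y)) * (1 - y)" by (simp add: mult.assoc)
  also have "\<dots> = P * (1 - y)" by (simp add: ay)
  finally have calc: "(\<Prod>i\<le>Suc K. dil (D * 2 ^ i) Alt) * (1 - fps_X ^ (D * 2 ^ Suc (Suc K))) = P * (1 - y)" .
  have IH: "1 - fps_X ^ D = P * (1 - y)" using Suc.IH unfolding P_def y_def .
  show ?case using IH calc by (rule trans[OF _ sym])
qed

lemma Hform:
  assumes "finite S" "\<forall>a\<in>S. L \<le> m a"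
  shows "\<exists>R. (\<Prod>a\<in>S. (1 - fps_X ^ (m a) :: int fps)) = 1 + fps_X ^ L * R"
  using assms
proof (induction S rule: finite_induct)
  case empty
  show ?case by (rule exI[of _ 0]) simp
next
  case (insert b S)
  then obtain R where R: "(\<Prod>a\<in>S. (1 - fps_X ^ (m a) :: int fps)) = 1 + fps_X ^ L * R" by auto
  have mb: "fps_X ^ (m b) = (fps_X ^ L * fps_X ^ (m b - L) :: int fps)"
    using insert(4) by (simp add: power_add[symmetric])
  define s :: "int fps" where "s = uminus (fps_X ^ (m b - L))"
  have "(\<Prod>a\<in>insert b S. (1 - fps_X ^ (m a) :: int fps)) = (1 + fps_X ^ L * s) * (1 + fps_X ^ L * R)"
    using insert R mb by (simp add: s_def)
  also have "\<dots> = 1 + fps_X ^ L * (s + R + fps_X ^ L * s * R)"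
    by (simp add: algebra_simps)
  finally show ?case by blast
qed

lemma trunc:
  assumes "n < L"
  shows "fps_nth (F * (1 + fps_X ^ L * R)) n = fps_nth (F :: int fps) n"
proof -
  have "F * (1 + fps_X ^ L * R) = F + fps_X ^ L * (F * R)" by (simp add: algebra_simps)
  then show ?thesis using assms by (simp add: fps_X_power_mult_nth)
qed



lemma main_ident:
  fixes B :: "nat set" and e n :: nat
  assumes B: "finite B" "\<forall>a\<in>B. a > 0" and e: "e > 0"
  shows "(\<Prod>a\<in>B. dil a (Le (e - 1))) =
    (\<Prod>a\<in>B. dil a One) * (\<Prod>i\<le>n. dil (e * 2 ^ i) (\<Prod>a\<in>B. dil a Alt)) *
    (\<Prod>a\<in>B. (1 - fps_X ^ (a * e * 2 ^ Suc n)))"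
proof -
  have step: "dil a (Le (e - 1)) = dil a One * ((\<Prod>i\<le>n. dil (e * 2 ^ i) (dil a Alt)) * (1 - fps_X ^ (a * e * 2 ^ Suc n)))"
    if a: "a \<in> B" for a
  proof -
    have a0: "a > 0" using a B by auto
    have ae: "a * e > 0" using a0 e by simp
    have "dil a (Le (e - 1)) = dil a One * (1 - fps_X ^ (a * e))"
      using e by (simp add: Le_eq dil_mult[OF a0] dil_sub dil_Xpow[OF a0])
    also have "1 - fps_X ^ (a * e) = (\<Prod>i\<le>n. dil (a * e * 2 ^ i) Alt) * (1 - fps_X ^ (a * e * 2 ^ Suc n))"
      by (rule tele[OF ae])
    also have "(\<Prod>i\<le>n. dil (a * e * 2 ^ i) Alt) = (\<Prod>i\<le>n. dil (e * 2 ^ i) (dil a Alt))"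
      by (rule prod.cong[OF refl]) (use a0 e in \<open>simp add: dil_dil mult.assoc\<close>)
    finally show ?thesis .
  qed
  have "(\<Prod>a\<in>B. dil a (Le (e - 1))) =
     (\<Prod>a\<in>B. dil a One * ((\<Prod>i\<le>n. dil (e * 2 ^ i) (dil a Alt)) * (1 - fps_X ^ (a * e * 2 ^ Suc n))))"
    by (rule prod.cong[OF refl]) (rule step)
  also have "\<dots> =
     (\<Prod>a\<in>B. dil a One) * ((\<Prod>a\<in>B. \<Prod>i\<le>n. dil (e * 2 ^ i) (dil a Alt)) * (\<Prod>a\<in>B. (1 - fps_X ^ (a * e * 2 ^ Suc n))))"
    by (simp only: prod.distrib)
  also have "(\<Prod>a\<in>B. \<Prod>i\<le>n. dil (e * 2 ^ i) (dil a Alt)) = (\<Prod>i\<le>n. \<Prod>a\<in>B. dil (e * 2 ^ i) (dil a Alt))"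
    by (rule prod.swap)
  also have "\<dots> = (\<Prod>i\<le>n. dil (e * 2 ^ i) (\<Prod>a\<in>B. dil a Alt))"
    using e by (simp add: dil_prod)
  finally show ?thesis by (simp add: mult.assoc)
qed


lemma Gamma_coeff:
  assumes A0: "0 \<notin> A" and mn: "m \<le> n"
  shows "fps_nth (\<Prod>i\<le>n. dil ((\<alpha>+1) * 2 ^ i) (\<Prod>a\<in>A \<inter> {..n}. dil a Alt)) m = Gamma A \<alpha> m"
proof -
  define PB where "PB = (\<Prod>a\<in>A \<inter> {..n}. dil a Alt)"
  define d where "d = (\<lambda>i::nat. (\<alpha>+1) * 2 ^ i)"
  have dpos: "\<forall>i\<in>{..n}. d i > 0" by (simp add: d_def)
  have c: "fps_nth (\<Prod>i\<le>n. dil (d i) PB) m = (\<Sum>N\<in>SS {..n} d m. \<Prod>i\<le>n. fps_nth PB (N i))"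
    by (rule core) (use dpos in auto)
  have bound: "N i \<le> m" if N: "N \<in> SS {..n} d m" for N i
  proof (cases "i \<in> {..n}")
    case True
    have "d i * N i \<le> (\<Sum>j\<in>{..n}. d j * N j)" by (rule member_le_sum) (use True in auto)
    moreover have "N i \<le> d i * N i" using dpos True by (simp add: Suc_le_eq)
    moreover have "(\<Sum>j\<in>{..n}. d j * N j) = m" using N by (simp add: SS_def)
    ultimately show ?thesis by linarith
  next
    case False then show ?thesis using N by (simp add: SS_def)
  qed
  have PBN: "(\<Prod>i\<le>n. fps_nth PB (N i)) = (\<Prod>i\<le>n. pbarA A (N i))" if N: "N \<in> SS {..n} d m" for N
  proof (rule prod.cong[OF refl])
    fix i assume "i \<in> {..n}"
    have "N i \<le> n" using bound[OF N, of i] mn by linarith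
    then show "fps_nth PB (N i) = pbarA A (N i)" unfolding PB_def by (rule coeff_PB[OF A0])
  qed
  have lhs: "fps_nth (\<Prod>i\<le>n. dil ((\<alpha>+1) * 2 ^ i) (\<Prod>a\<in>A \<inter> {..n}. dil a Alt)) m
      = (\<Sum>N\<in>SS {..n} d m. \<Prod>i\<le>n. pbarA A (N i))"
    using c PBN unfolding PB_def d_def by simp
  show ?thesis
  proof (cases "m = 0")
    case True
    have "SS {..n} d m = {\<lambda>_. 0}"
    proof
      show "SS {..n} d m \<subseteq> {\<lambda>_. 0}"
      proof
        fix N assume N: "N \<in> SS {..n} d m"
        have "\<forall>i. N i = 0" using bound[OF N] True by simp
        then show "N \<in> {\<lambda>_. 0}" by auto
      qed
      show "{\<lambda>_. 0} \<subseteq> SS {..n} d m" using True by (simp add: SS_def)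
    qed
    then show ?thesis using lhs True pbar0[OF A0] by (simp add: Gamma_def)
  next
    case False
    define G where "G = {N :: nat \<Rightarrow> nat. finite {i. N i \<noteq> 0} \<and>
                 m = (\<alpha> + 1) * (\<Sum>i \<in> {i. N i \<noteq> 0}. 2 ^ i * N i)}"
    have Gam: "Gamma A \<alpha> m = (\<Sum>N\<in>G. \<Prod>j \<in> {j. N j \<noteq> 0}. pbarA A (N j))"
      using False by (simp add: Gamma_def G_def)
    have sumeq: "(\<Sum>i \<in> {i. N i \<noteq> 0}. 2 ^ i * N i) = (\<Sum>i\<le>n. 2 ^ i * N i)"
      if "{i. N i \<noteq> 0} \<subseteq> {..n}" for N :: "nat \<Rightarrow> nat"
      by (rule sum.mono_neutral_left) (use that in auto)
    have dsum: "(\<Sum>i\<in>{..n}. d i * N i) = (\<alpha>+1) * (\<Sum>i\<le>n. 2 ^ i * N i)" for N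
      unfolding d_def sum_distrib_left by (simp only: mult.assoc)
    have GS: "G = SS {..n} d m"
    proof
      show "G \<subseteq> SS {..n} d m"
      proof
        fix N assume N: "N \<in> G"
        have fin: "finite {i. N i \<noteq> 0}" and mN: "m = (\<alpha> + 1) * (\<Sum>i \<in> {i. N i \<noteq> 0}. 2 ^ i * N i)"
          using N by (auto simp: G_def)
        have sup: "{i. N i \<noteq> 0} \<subseteq> {..n}"
        proof
          fix i assume i: "i \<in> {i. N i \<noteq> 0}"
          have "2 ^ i * N i \<le> (\<Sum>j \<in> {i. N i \<noteq> 0}. 2 ^ j * N j)"
            by (rule member_le_sum) (use i fin in auto)
          moreover have "(2::nat) ^ i \<le> 2 ^ i * N i" using i by simp
          moreover have "(\<Sum>j \<in> {i. N i \<noteq> 0}. 2 ^ j * N j) \<le> m" using mN by simp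
          moreover have "i < 2 ^ i" by (rule less_exp)
          ultimately have "i \<le> n" using mn by linarith
          then show "i \<in> {..n}" by simp
        qed
        show "N \<in> SS {..n} d m"
          unfolding SS_def using sup mN sumeq[OF sup] dsum by auto
      qed
      show "SS {..n} d m \<subseteq> G"
      proof
        fix N assume N: "N \<in> SS {..n} d m"
        have sup: "{i. N i \<noteq> 0} \<subseteq> {..n}" using N by (auto simp: SS_def)
        then have fin: "finite {i. N i \<noteq> 0}" by (rule finite_subset) simp
        have "m = (\<Sum>i\<in>{..n}. d i * N i)" using N by (simp add: SS_def)
        then show "N \<in> G" unfolding G_def using fin sumeq[OF sup] dsum by auto
      qed
    qed
    have prodeq: "(\<Prod>j \<in> {j. N j \<noteq> 0}. pbarA A (N j)) = (\<Prod>i\<le>n. pbarA A (N i))"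
      if "N \<in> SS {..n} d m" for N
    proof (rule prod.mono_neutral_left)
      show "{j. N j \<noteq> 0} \<subseteq> {..n}" using that by (auto simp: SS_def)
      show "\<forall>i\<in>{..n} - {j. N j \<noteq> 0}. pbarA A (N i) = 1" using pbar0[OF A0] by auto
    qed simp
    show ?thesis unfolding Gam lhs GS using prodeq by (auto intro: sum.cong)
  qed
qed


theorem mainTheorem3:
  fixes \<psi> :: "nat \<Rightarrow> nat" and A :: "nat set" and \<alpha> :: nat and n :: nat
  assumes "\<forall>k\<ge>1. \<psi> k \<ge> 1"
    and "inj_on \<psi> {1..}"
    and "A = \<psi> ` {1..}"
    and "\<alpha> \<ge> 1"
  shows "int (pA_alpha A \<alpha> n) = (\<Sum>i = 0..n. int (pA A (n - i)) * Gamma A \<alpha> i)"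
proof -
  have A0: "0 \<notin> A"
  proof
    assume "0 \<in> A"
    then obtain k where "k \<in> {1..}" "\<psi> k = 0" using assms(3) by auto
    then show False using assms(1) by auto
  qed
  define B where "B = A \<inter> {..n}"
  define e where "e = \<alpha> + 1"
  have finB: "finite B" unfolding B_def by simp
  have Bpos: "\<forall>a\<in>B. a > 0" unfolding B_def using pos[OF A0] .
  have e0: "e > 0" unfolding e_def by simp
  have big: "\<forall>a\<in>B. 2 ^ Suc n \<le> a * e * 2 ^ Suc n"
  proof
    fix a assume "a \<in> B"
    then have "1 \<le> a * e" using Bpos e0 by (simp add: Suc_le_eq)
    then show "2 ^ Suc n \<le> a * e * 2 ^ Suc n" by simp
  qed
  obtain R where R: "(\<Prod>a\<in>B. (1 - fps_X ^ (a * e * 2 ^ Suc n) :: int fps)) = 1 + fps_X ^ (2 ^ Suc n) * R"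
    using Hform[OF finB big] by blast
  have ln: "n < 2 ^ Suc n" using less_exp[of "Suc n"] by linarith
  define P1 where "P1 = (\<Prod>a\<in>B. dil a One)"
  define Q where "Q = (\<Prod>i\<le>n. dil (e * 2 ^ i) (\<Prod>a\<in>B. dil a Alt))"
  have "int (pA_alpha A \<alpha> n) = fps_nth (\<Prod>a\<in>B. dil a (Le \<alpha>)) n"
    unfolding B_def by (rule coeff_PL[OF A0 le_refl, symmetric])
  also have "(\<Prod>a\<in>B. dil a (Le \<alpha>)) = P1 * Q * (1 + fps_X ^ (2 ^ Suc n) * R)"
    using main_ident[OF finB Bpos e0, of n] R unfolding P1_def Q_def by (simp add: e_def)
  also have "fps_nth (P1 * Q * (1 + fps_X ^ (2 ^ Suc n) * R)) n = fps_nth (Q * P1) n"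
    using trunc[OF ln] by (simp add: mult.commute)
  also have "\<dots> = (\<Sum>i=0..n. fps_nth Q i * fps_nth P1 (n - i))" by (rule fps_mult_nth)
  also have "\<dots> = (\<Sum>i=0..n. int (pA A (n - i)) * Gamma A \<alpha> i)"
  proof (rule sum.cong[OF refl])
    fix i assume i: "i \<in> {0..n}"
    have "fps_nth Q i = Gamma A \<alpha> i"
      unfolding Q_def B_def e_def by (rule Gamma_coeff[OF A0]) (use i in simp)
    moreover have "fps_nth P1 (n - i) = int (pA A (n - i))"
      unfolding P1_def B_def by (rule coeff_P1[OF A0]) simp
    ultimately show "fps_nth Q i * fps_nth P1 (n - i) = int (pA A (n - i)) * Gamma A \<alpha> i"
      by simp
  qed
  finally show ?thesis .
qed

end
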